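(* A regular Hausdorff space $X$ is $c$-semi-stratifiable if and only if $\mathcal{F}(X)$ is $c$-semi-stratifiable.
   Context: $\mathcal{F}(X)$ is the set of nonempty finite subsets of $X$ with the Vietoris topology (base: $\langle U_1,\dots,U_k\rangle=\{A: A\subset\bigcup_i U_i,\ A\cap U_j\neq\emptyset\ \forall j\}$, $U_i$ open in $X$). A space $Y$ is $c$-semi-stratifiable if to every compact $C\subset Y$ one can assign a sequence $\{G(n,C)\}_{n\in\omega}$ of open subsets of $Y$ such that (1) $C=\bigcap_{n\in\omega}G(n,C)$, and (2) if $C\subset F$ with $C,F$ compact, then $G(n,C)\subset G(n,F)$ for all $n$. *)

theory Defs
  imports "HOL-Analysis.Analysis"
begin

definition fin_subsets :: "'a topology \<Rightarrow> 'a set set" where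
  "fin_subsets X = {A. finite A \<and> A \<noteq> {} \<and> A \<subseteq> topspace X}"

definition vietoris_box :: "'a set list \<Rightarrow> 'a set set" where
  "vietoris_box Us = {A. finite A \<and> A \<noteq> {} \<and> A \<subseteq> \<Union>(set Us) \<and> (\<forall>U\<in>set Us. A \<inter> U \<noteq> {})}"

definition FinVietoris :: "'a topology \<Rightarrow> 'a set topology" where
  "FinVietoris X = topology_generated_by
     {vietoris_box Us | Us. Us \<noteq> [] \<and> (\<forall>U\<in>set Us. openin X U)}"

definition c_semi_stratifiable :: "'b topology \<Rightarrow> bool" where
  "c_semi_stratifiable Y \<longleftrightarrow>
     (\<exists>G :: nat \<Rightarrow> 'b set \<Rightarrow> 'b set.
        (\<forall>C. compactin Y C \<longrightarrow> (\<forall>n. openin Y (G n C)) \<and> C = (\<Inter>n. G n C)) \<and>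
        (\<forall>C F. compactin Y C \<and> compactin Y F \<and> C \<subseteq> F \<longrightarrow> (\<forall>n. G n C \<subseteq> G n F)))"

end

theory Submission
  imports Defs
begin

lemma box_open:
  assumes "Us \<noteq> []" "\<forall>U\<in>set Us. openin X U"
  shows "openin (FinVietoris X) (vietoris_box Us)"
  unfolding FinVietoris_def
  by (rule topology_generated_by_Basis) (use assms in blast)

lemma box1: "vietoris_box [U] = {A. finite A \<and> A \<noteq> {} \<and> A \<subseteq> U}"
  unfolding vietoris_box_def by auto

lemma topspace_FV:
  assumes "A \<in> topspace (FinVietoris X)"
  shows "finite A \<and> A \<noteq> {} \<and> A \<subseteq> topspace X"
proof -
  from assms obtain Us where "Us \<noteq> []" "\<forall>U\<in>set Us. openin X U" "A \<in> vietoris_box Us"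
    unfolding FinVietoris_def topology_generated_by_topspace by blast
  then have "finite A" "A \<noteq> {}" "A \<subseteq> \<Union>(set Us)" "\<Union>(set Us) \<subseteq> topspace X"
    unfolding vietoris_box_def using openin_subset by auto
  then show ?thesis by blast
qed
lemma box_gen:
  assumes "set xs = B" "\<And>b. b \<in> B \<Longrightarrow> f b \<subseteq> W"
  shows "vietoris_box (W # map f xs) = {A. finite A \<and> A \<noteq> {} \<and> A \<subseteq> W \<and> (\<forall>b\<in>B. A \<inter> f b \<noteq> {})}"
proof -
  have "\<Union>(set (W # map f xs)) = W" using assms by auto
  then show ?thesis unfolding vietoris_box_def using assms(1) by auto
qed

lemma union_compact:
  fixes X :: "'a topology"
  assumes K: "compactin (FinVietoris X) K"
  shows "compactin X (\<Union>K)"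
  unfolding compactin_def
proof (intro conjI allI impI)
  have Ksub: "K \<subseteq> topspace (FinVietoris X)" using K compactin_subset_topspace by blast
  then show "\<Union>K \<subseteq> topspace X" using topspace_FV by blast
  fix \<U> :: "'a set set" assume U: "(\<forall>U\<in>\<U>. openin X U) \<and> \<Union>K \<subseteq> \<Union>\<U>"
  define g :: "'a set set \<Rightarrow> 'a set set" where "g = (\<lambda>\<V>. vietoris_box [\<Union>\<V>])"
  define S :: "'a set set set" where "S = {\<V>. finite \<V> \<and> \<V> \<subseteq> \<U>}"
  have op: "\<forall>W\<in>g ` S. openin (FinVietoris X) W"
  proof
    fix W assume "W \<in> g ` S"
    then obtain V where V: "V \<subseteq> \<U>" "W = vietoris_box [\<Union>V]" unfolding g_def S_def by blast
    have "openin X (\<Union>V)"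
    proof (rule openin_Union)
      fix T assume "T \<in> V"
      then have "T \<in> \<U>" by (rule subsetD[OF V(1)])
      then show "openin X T" using U by simp
    qed
    then show "openin (FinVietoris X) W" using V(2) by (simp add: box_open)
  qed
  have cov: "K \<subseteq> \<Union>(g ` S)"
  proof
    fix B assume B: "B \<in> K"
    then have fB: "finite B \<and> B \<noteq> {} \<and> B \<subseteq> topspace X" using Ksub topspace_FV by blast
    have "\<forall>b\<in>B. \<exists>U. U \<in> \<U> \<and> b \<in> U" using U B by blast
    then obtain h where h: "\<forall>b\<in>B. h b \<in> \<U> \<and> b \<in> h b" using bchoice[of B "\<lambda>b U. U \<in> \<U> \<and> b \<in> U"] by blast
    have "h ` B \<in> S" unfolding S_def using h fB by auto
    moreover have "B \<in> g (h ` B)" unfolding g_def box1 using fB h by auto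
    ultimately show "B \<in> \<Union>(g ` S)" by blast
  qed
  obtain \<F> where F: "finite \<F>" "\<F> \<subseteq> g ` S" "K \<subseteq> \<Union>\<F>"
  proof -
    have "\<forall>\<U>. (\<forall>U\<in>\<U>. openin (FinVietoris X) U) \<and> K \<subseteq> \<Union>\<U> \<longrightarrow> (\<exists>\<F>. finite \<F> \<and> \<F> \<subseteq> \<U> \<and> K \<subseteq> \<Union>\<F>)"
      using K unfolding compactin_def by blast
    then have "\<exists>\<F>. finite \<F> \<and> \<F> \<subseteq> g ` S \<and> K \<subseteq> \<Union>\<F>" using op cov by blast
    then show ?thesis using that by blast
  qed
  then obtain T where T: "T \<subseteq> S" "finite T" "\<F> = g ` T"
    using finite_subset_image[OF F(1) F(2)] by blast
  show "\<exists>\<F>. finite \<F> \<and> \<F> \<subseteq> \<U> \<and> \<Union>K \<subseteq> \<Union>\<F>"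
  proof (intro exI conjI)
    show "finite (\<Union>T)" using T S_def by auto
    show "\<Union>T \<subseteq> \<U>" using T S_def by auto
    show "\<Union>K \<subseteq> \<Union>(\<Union>T)"
    proof
      fix x assume "x \<in> \<Union>K"
      then obtain B where "B \<in> K" "x \<in> B" by blast
      then obtain \<V> where "\<V> \<in> T" "B \<in> g \<V>" using F T by blast
      then show "x \<in> \<Union>(\<Union>T)" using \<open>x \<in> B\<close> unfolding g_def box1 by blast
    qed
  qed
qed

lemma sing_cont:
  "continuous_map X (FinVietoris X) (\<lambda>x. {x})"
  unfolding FinVietoris_def
proof (rule continuous_on_generated_topo)
  fix W assume "W \<in> {vietoris_box Us | Us. Us \<noteq> [] \<and> (\<forall>U\<in>set Us. openin X U)}"
  then obtain Us where Us: "W = vietoris_box Us" "Us \<noteq> []" "\<forall>U\<in>set Us. openin X U" by blast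
  have "(\<lambda>x. {x}) -` W \<inter> topspace X = topspace X \<inter> \<Inter>(set Us)"
  proof -
    have "set Us \<noteq> {}" using Us(2) by simp
    then show ?thesis using Us(1) unfolding vietoris_box_def by auto
  qed
  moreover have "openin X (\<Inter>(set Us))"
    by (rule openin_Inter) (use Us in auto)
  then have "openin X (topspace X \<inter> \<Inter>(set Us))"
    by (simp add: openin_Int)
  ultimately show "openin X ((\<lambda>x. {x}) -` W \<inter> topspace X)" by simp
next
  show "(\<lambda>x. {x}) ` topspace X \<subseteq> \<Union>{vietoris_box Us | Us. Us \<noteq> [] \<and> (\<forall>U\<in>set Us. openin X U)}"
  proof
    fix A assume "A \<in> (\<lambda>x. {x}) ` topspace X"
    then have "A \<in> vietoris_box [topspace X]" unfolding box1 by auto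
    moreover have "vietoris_box [topspace X] \<in> {vietoris_box Us | Us. Us \<noteq> [] \<and> (\<forall>U\<in>set Us. openin X U)}"
      by (rule CollectI, rule exI[of _ "[topspace X]"]) simp
    ultimately show "A \<in> \<Union>{vietoris_box Us | Us. Us \<noteq> [] \<and> (\<forall>U\<in>set Us. openin X U)}"
      by (rule UnionI[rotated])
  qed
qed

lemma dir1:
  fixes X :: "'a topology"
  assumes "c_semi_stratifiable (FinVietoris X)"
  shows "c_semi_stratifiable X"
proof -
  obtain Gf :: "nat \<Rightarrow> 'a set set \<Rightarrow> 'a set set" where Gf: "(\<forall>C. compactin (FinVietoris X) C \<longrightarrow> (\<forall>n. openin (FinVietoris X) (Gf n C)) \<and> C = (\<Inter>n. Gf n C)) \<and>
    (\<forall>C F. compactin (FinVietoris X) C \<and> compactin (FinVietoris X) F \<and> C \<subseteq> F \<longrightarrow> (\<forall>n. Gf n C \<subseteq> Gf n F))"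
    using assms unfolding c_semi_stratifiable_def by (rule exE)
  have Gf1: "\<forall>C. compactin (FinVietoris X) C \<longrightarrow> (\<forall>n. openin (FinVietoris X) (Gf n C)) \<and> C = (\<Inter>n. Gf n C)"
    using Gf by (rule conjunct1)
  have Gf2: "\<forall>C F. compactin (FinVietoris X) C \<and> compactin (FinVietoris X) F \<and> C \<subseteq> F \<longrightarrow> (\<forall>n. Gf n C \<subseteq> Gf n F)"
    using Gf by (rule conjunct2)
  define G :: "nat \<Rightarrow> 'a set \<Rightarrow> 'a set" where "G = (\<lambda>n C. {x \<in> topspace X. {x} \<in> Gf n ((\<lambda>x. {x}) ` C)})"
  have cpt: "compactin (FinVietoris X) ((\<lambda>x. {x}) ` C)" if "compactin X C" for C
    using image_compactin[OF that sing_cont] .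
  have P1: "(\<forall>n. openin X (G n C)) \<and> C = (\<Inter>n. G n C)" if C: "compactin X C" for C
  proof -
    have H: "(\<forall>n. openin (FinVietoris X) (Gf n ((\<lambda>x. {x}) ` C))) \<and> (\<lambda>x. {x}) ` C = (\<Inter>n. Gf n ((\<lambda>x. {x}) ` C))"
      using mp[OF spec[OF Gf1] cpt[OF C]] .
    have op: "\<forall>n. openin X (G n C)"
    proof
      fix n
      have "openin (FinVietoris X) (Gf n ((\<lambda>x. {x}) ` C))" using H by simp
      then show "openin X (G n C)" unfolding G_def
        by (rule openin_continuous_map_preimage[OF sing_cont])
    qed
    have eq: "(\<lambda>x. {x}) ` C = (\<Inter>n. Gf n ((\<lambda>x. {x}) ` C))" using H by (rule conjunct2)
    have "C = (\<Inter>n. G n C)"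
    proof
      show "C \<subseteq> (\<Inter>n. G n C)"
      proof
        fix x assume x: "x \<in> C"
        then have xt: "x \<in> topspace X" using compactin_subset_topspace[OF C] by (rule rev_subsetD)
        have "{x} \<in> (\<lambda>x. {x}) ` C" using x by (rule imageI)
        then have "{x} \<in> (\<Inter>n. Gf n ((\<lambda>x. {x}) ` C))" using eq by simp
        then show "x \<in> (\<Inter>n. G n C)" unfolding G_def using xt by simp
      qed
      show "(\<Inter>n. G n C) \<subseteq> C"
      proof
        fix x assume "x \<in> (\<Inter>n. G n C)"
        then have "{x} \<in> (\<Inter>n. Gf n ((\<lambda>x. {x}) ` C))" unfolding G_def by simp
        then have "{x} \<in> (\<lambda>x. {x}) ` C" using eq by simp
        then show "x \<in> C" by auto
      qed
    qed
    with op show ?thesis by (rule conjI)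
  qed
  have P2: "\<forall>n. G n C \<subseteq> G n F" if "compactin X C" "compactin X F" "C \<subseteq> F" for C F
  proof
    fix n
    have "Gf n ((\<lambda>x. {x}) ` C) \<subseteq> Gf n ((\<lambda>x. {x}) ` F)"
      using mp[OF spec[OF spec[OF Gf2]] conjI[OF cpt[OF that(1)] conjI[OF cpt[OF that(2)] image_mono[OF that(3)]]]] by simp
    then show "G n C \<subseteq> G n F" unfolding G_def by auto
  qed
  show ?thesis unfolding c_semi_stratifiable_def
  proof (rule exI[of _ G], rule conjI)
    show "\<forall>C. compactin X C \<longrightarrow> (\<forall>n. openin X (G n C)) \<and> C = (\<Inter>n. G n C)"
      using P1 by simp
    show "\<forall>C F. compactin X C \<and> compactin X F \<and> C \<subseteq> F \<longrightarrow> (\<forall>n. G n C \<subseteq> G n F)"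
      using P2 by simp
  qed
qed

lemma css_decr:
  fixes X :: "'a topology"
  assumes "c_semi_stratifiable X"
  obtains G :: "nat \<Rightarrow> 'a set \<Rightarrow> 'a set" where
    "\<And>C n. compactin X C \<Longrightarrow> openin X (G n C)"
    "\<And>C. compactin X C \<Longrightarrow> C = (\<Inter>n. G n C)"
    "\<And>C F n. compactin X C \<Longrightarrow> compactin X F \<Longrightarrow> C \<subseteq> F \<Longrightarrow> G n C \<subseteq> G n F"
    "\<And>C m n. m \<le> n \<Longrightarrow> G n C \<subseteq> G m C"
proof -
  obtain G0 :: "nat \<Rightarrow> 'a set \<Rightarrow> 'a set" where G0: "(\<forall>C. compactin X C \<longrightarrow> (\<forall>n. openin X (G0 n C)) \<and> C = (\<Inter>n. G0 n C)) \<and>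
    (\<forall>C F. compactin X C \<and> compactin X F \<and> C \<subseteq> F \<longrightarrow> (\<forall>n. G0 n C \<subseteq> G0 n F))"
    using assms unfolding c_semi_stratifiable_def by (rule exE)
  have op0: "openin X (G0 n C)" if "compactin X C" for n C using G0 that by simp
  have eq0: "C = (\<Inter>n. G0 n C)" if "compactin X C" for C using G0 that by simp
  have mono0: "G0 n C \<subseteq> G0 n F" if "compactin X C" "compactin X F" "C \<subseteq> F" for C F n
    using G0 that by simp
  define G :: "nat \<Rightarrow> 'a set \<Rightarrow> 'a set" where "G = (\<lambda>n C. \<Inter>((\<lambda>m. G0 m C) ` {..n}))"
  show ?thesis
  proof (rule that)
    fix C n assume C: "compactin X C"
    show "openin X (G n C)" unfolding G_def
      by (rule openin_Inter) (use op0[OF C] in auto)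
  next
    fix C assume C: "compactin X C"
    show "C = (\<Inter>n. G n C)"
    proof
      show "C \<subseteq> (\<Inter>n. G n C)"
      proof
        fix x assume "x \<in> C"
        then have "\<forall>m. x \<in> G0 m C" using eq0[OF C] by blast
        then show "x \<in> (\<Inter>n. G n C)" unfolding G_def by simp
      qed
      show "(\<Inter>n. G n C) \<subseteq> C"
      proof
        fix x assume x: "x \<in> (\<Inter>n. G n C)"
        have "x \<in> G0 m C" for m
        proof -
          have "x \<in> G m C" using x by simp
          then show ?thesis unfolding G_def by simp
        qed
        then have "x \<in> (\<Inter>n. G0 n C)" by simp
        then show "x \<in> C" using eq0[OF C] by simp
      qed
    qed
  next
    fix C F n assume "compactin X C" "compactin X F" "C \<subseteq> F"
    then have "\<And>m. G0 m C \<subseteq> G0 m F" using mono0 by blast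
    then show "G n C \<subseteq> G n F" unfolding G_def by (simp add: INF_mono')
  next
    fix C and m n :: nat assume "m \<le> n"
    then show "G n C \<subseteq> G m C" unfolding G_def by (intro Inter_anti_mono image_mono) auto
  qed
qed

lemma dir2:
  fixes X :: "'a topology"
  assumes reg: "regular_space X" and hd: "Hausdorff_space X" and css: "c_semi_stratifiable X"
  shows "c_semi_stratifiable (FinVietoris X)"
proof -
  obtain G :: "nat \<Rightarrow> 'a set \<Rightarrow> 'a set" where
    Gop: "\<And>C n. compactin X C \<Longrightarrow> openin X (G n C)" and
    Geq: "\<And>C. compactin X C \<Longrightarrow> C = (\<Inter>n. G n C)" and
    Gmono: "\<And>C F n. compactin X C \<Longrightarrow> compactin X F \<Longrightarrow> C \<subseteq> F \<Longrightarrow> G n C \<subseteq> G n F" and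
    Ganti: "\<And>C m n. m \<le> n \<Longrightarrow> G n C \<subseteq> G m C"
    apply (rule css_decr[OF css])
    apply (rule that)
    by assumption+
  have t1: "t1_space X" using hd by (rule Hausdorff_imp_t1_space)
  have fclosed: "closedin X S" if "finite S" "S \<subseteq> topspace X" for S
    using t1 that unfolding t1_space_closedin_finite by blast
  have regI: "\<exists>U V. openin X U \<and> openin X V \<and> a \<in> U \<and> C \<subseteq> V \<and> disjnt U V"
    if "closedin X C" "a \<in> topspace X" "a \<notin> C" for C a
    using reg that unfolding regular_space_def by blast
  have notin: "\<exists>n. a \<notin> G n C" if "compactin X C" "a \<notin> C" for a C
  proof (rule ccontr)
    assume "\<nexists>n. a \<notin> G n C"
    then have "a \<in> (\<Inter>n. G n C)" by simp
    then show False using Geq[OF that(1)] that(2) by simp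
  qed
  have fincpt: "compactin X B" if "finite B" "B \<subseteq> topspace X" for B
    using that by (simp add: finite_imp_compactin)
  define lst :: "'a set \<Rightarrow> 'a list" where "lst = (\<lambda>B. SOME xs. set xs = B)"
  have lst: "set (lst B) = B" if "finite B" for B
    unfolding lst_def using someI_ex[OF finite_list[OF that]] .
  define W :: "nat \<Rightarrow> 'a set \<Rightarrow> 'a set set" where
    "W = (\<lambda>n B. {A. finite A \<and> A \<noteq> {} \<and> A \<subseteq> G n B \<and> (\<forall>b\<in>B. A \<inter> G n {b} \<noteq> {})})"
  have Wopen: "openin (FinVietoris X) (W n B)" if B: "B \<in> topspace (FinVietoris X)" for n B
  proof -
    have fB: "finite B" "B \<noteq> {}" "B \<subseteq> topspace X" using topspace_FV[OF B] by auto
    have cB: "compactin X B" using fincpt fB by simp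
    have sub: "G n {b} \<subseteq> G n B" if "b \<in> B" for b
      using Gmono[of "{b}" B n] cB that fB(3) by auto
    have eq: "W n B = vietoris_box (G n B # map (\<lambda>b. G n {b}) (lst B))"
      unfolding W_def by (rule box_gen[symmetric]) (use lst[OF fB(1)] sub in auto)
    have "\<forall>U\<in>set (G n B # map (\<lambda>b. G n {b}) (lst B)). openin X U"
      using Gop cB lst[OF fB(1)] fB(3) by auto
    then show ?thesis unfolding eq by (intro box_open) auto
  qed
  have Wanti: "W n B \<subseteq> W m B" if "m \<le> n" for m n B
  proof
    fix A assume A: "A \<in> W n B"
    have "G n B \<subseteq> G m B" using Ganti[OF that] .
    moreover have "\<And>b. G n {b} \<subseteq> G m {b}" using Ganti[OF that] .
    ultimately show "A \<in> W m B" using A unfolding W_def by blast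
  qed
  have Wself: "B \<in> W n B" if B: "B \<in> topspace (FinVietoris X)" for n B
  proof -
    have fB: "finite B" "B \<noteq> {}" "B \<subseteq> topspace X" using topspace_FV[OF B] by auto
    have "B \<subseteq> G n B" using Geq[OF fincpt[OF fB(1) fB(3)]] by blast
    moreover have "B \<inter> G n {b} \<noteq> {}" if "b \<in> B" for b
    proof -
      have "compactin X {b}" using that fB(3) by auto
      then have "b \<in> G n {b}" using Geq[of "{b}"] by blast
      then show ?thesis using that by blast
    qed
    ultimately show ?thesis unfolding W_def using fB by blast
  qed
  define Gf :: "nat \<Rightarrow> 'a set set \<Rightarrow> 'a set set" where "Gf = (\<lambda>n K. \<Union>B\<in>K. W n B)"
  have P1: "(\<forall>n. openin (FinVietoris X) (Gf n K)) \<and> K = (\<Inter>n. Gf n K)"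
    if K: "compactin (FinVietoris X) K" for K
  proof -
    have Ksub: "K \<subseteq> topspace (FinVietoris X)" using K by (rule compactin_subset_topspace)
    have op: "\<forall>n. openin (FinVietoris X) (Gf n K)"
    proof
      fix n
      show "openin (FinVietoris X) (Gf n K)" unfolding Gf_def
        by (rule openin_Union) (use Wopen Ksub in auto)
    qed
    have "K \<subseteq> (\<Inter>n. Gf n K)"
    proof
      fix B assume "B \<in> K"
      then show "B \<in> (\<Inter>n. Gf n K)" unfolding Gf_def using Wself Ksub by blast
    qed
    moreover have "(\<Inter>n. Gf n K) \<subseteq> K"
    proof
      fix A assume A: "A \<in> (\<Inter>n. Gf n K)"
      show "A \<in> K"
      proof (rule ccontr)
        assume AK: "A \<notin> K"
        have "A \<in> Gf 0 K" using A by simp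
        then obtain B0 where "B0 \<in> K" "A \<in> W 0 B0" unfolding Gf_def by blast
        then have fA: "finite A" "A \<noteq> {}" "A \<subseteq> G 0 B0" unfolding W_def by auto
        have "B0 \<in> topspace (FinVietoris X)" using Ksub \<open>B0 \<in> K\<close> by (rule subsetD)
        then have "finite B0 \<and> B0 \<noteq> {} \<and> B0 \<subseteq> topspace X" by (rule topspace_FV)
        then have "openin X (G 0 B0)" using Gop fincpt by simp
        then have fA3: "A \<subseteq> topspace X" using fA(3) openin_subset by blast
        define KK where "KK = \<Union>K"
        have cKK: "compactin X KK" unfolding KK_def using K by (rule union_compact)
        have claim: "\<exists>V n. openin (FinVietoris X) V \<and> B \<in> V \<and> (\<forall>B'\<in>K. B' \<in> V \<longrightarrow> A \<notin> W n B')"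
          if "B \<in> K" for B
        proof -
          have Bt: "B \<in> topspace (FinVietoris X)" using Ksub that by (rule subsetD)
          have fB: "finite B" "B \<noteq> {}" "B \<subseteq> topspace X" using topspace_FV[OF Bt] by auto
          have BA: "B \<noteq> A" using AK that by auto
          show ?thesis
          proof (cases "A \<subseteq> B")
            case False
            then obtain a where a: "a \<in> A" "a \<notin> B" by blast
            have clB: "closedin X B" using fclosed fB(1) fB(3) by simp
            have at: "a \<in> topspace X" using fA3 a(1) by (rule subsetD)
            obtain U V where UV: "openin X U" "openin X V" "a \<in> U" "B \<subseteq> V" "disjnt U V"
              using regI[OF clB at a(2)] by blast
            define C where "C = (topspace X - U) \<inter> KK"
            have cC: "compactin X C" unfolding C_def
              by (rule closed_Int_compactin[OF closedin_diff[OF closedin_topspace UV(1)] cKK])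
            have "a \<notin> C" using UV(3) by (simp add: C_def)
            then obtain n where n: "a \<notin> G n C" using notin[OF cC] by blast
            have Vt: "V \<subseteq> topspace X" using UV(2) by (rule openin_subset)
            show ?thesis
            proof (rule exI[of _ "vietoris_box [V]"], rule exI[of _ n], intro conjI)
              show "openin (FinVietoris X) (vietoris_box [V])" using UV(2) by (intro box_open) auto
              show "B \<in> vietoris_box [V]" unfolding box1 using fB UV(4) by simp
              show "\<forall>B'\<in>K. B' \<in> vietoris_box [V] \<longrightarrow> A \<notin> W n B'"
              proof (intro ballI impI)
                fix B' assume B'K: "B' \<in> K" and B'V: "B' \<in> vietoris_box [V]"
                then have fB': "finite B'" "B' \<subseteq> V" unfolding box1 by auto
                have "B' \<subseteq> C"
                proof
                  fix x assume x: "x \<in> B'"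
                  then have "x \<in> V" using fB' by blast
                  moreover have "x \<in> KK" unfolding KK_def using x B'K by blast
                  moreover have "x \<notin> U" using \<open>x \<in> V\<close> UV(5) unfolding disjnt_def by blast
                  ultimately show "x \<in> C" unfolding C_def using Vt by blast
                qed
                moreover have "compactin X B'" using fincpt fB' Vt by simp
                ultimately have "G n B' \<subseteq> G n C" using Gmono cC by simp
                then have "a \<notin> G n B'" using n by blast
                then show "A \<notin> W n B'" using a(1) unfolding W_def by blast
              qed
            qed
          next
            case True
            then obtain b where b: "b \<in> B" "b \<notin> A" using BA by blast
            have clA: "closedin X A" using fclosed fA(1) fA3 by simp
            have bt: "b \<in> topspace X" using fB(3) b(1) by (rule subsetD)
            obtain U V where UV: "openin X U" "openin X V" "b \<in> U" "A \<subseteq> V" "disjnt U V"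
              using regI[OF clA bt b(2)] by blast
            define C where "C = (topspace X - V) \<inter> KK"
            have cC: "compactin X C" unfolding C_def
              by (rule closed_Int_compactin[OF closedin_diff[OF closedin_topspace UV(2)] cKK])
            have "\<forall>a\<in>A. \<exists>n. a \<notin> G n C"
            proof
              fix a assume "a \<in> A"
              then have "a \<notin> C" using UV(4) by (auto simp: C_def)
              then show "\<exists>n. a \<notin> G n C" using notin[OF cC] by blast
            qed
            then obtain f where f: "\<forall>a\<in>A. a \<notin> G (f a) C" by (rule bchoice[elim_format]) blast
            have "finite (f ` A)" using fA(1) by simp
            then obtain N where N: "\<forall>k\<in>f ` A. k \<le> N" unfolding finite_nat_set_iff_bounded_le by blast
            have AN: "a \<notin> G N C" if "a \<in> A" for a
            proof -
              have "G N C \<subseteq> G (f a) C" using N that by (intro Ganti) simp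
              then show ?thesis using f that by blast
            qed
            have Ut: "U \<subseteq> topspace X" using UV(1) by (rule openin_subset)
            show ?thesis
            proof (rule exI[of _ "vietoris_box [topspace X, U]"], rule exI[of _ N], intro conjI)
              show "openin (FinVietoris X) (vietoris_box [topspace X, U])" using UV(1) by (intro box_open) auto
              show "B \<in> vietoris_box [topspace X, U]" unfolding vietoris_box_def using fB b(1) UV(3) Ut by auto
              show "\<forall>B'\<in>K. B' \<in> vietoris_box [topspace X, U] \<longrightarrow> A \<notin> W N B'"
              proof (intro ballI impI)
                fix B' assume B'K: "B' \<in> K" and B'V: "B' \<in> vietoris_box [topspace X, U]"
                then have "B' \<inter> U \<noteq> {}" unfolding vietoris_box_def by simp
                then obtain b' where b': "b' \<in> B'" "b' \<in> U" by blast
                have "b' \<in> KK" unfolding KK_def using b'(1) B'K by blast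
                moreover have "b' \<notin> V" using b'(2) UV(5) unfolding disjnt_def by blast
                ultimately have "b' \<in> C" unfolding C_def using Ut b'(2) by blast
                moreover have "compactin X {b'}" using Ut b'(2) by auto
                ultimately have sub: "G N {b'} \<subseteq> G N C" using Gmono cC by simp
                show "A \<notin> W N B'"
                proof
                  assume "A \<in> W N B'"
                  then have "A \<inter> G N {b'} \<noteq> {}" using b'(1) unfolding W_def by blast
                  then obtain a where "a \<in> A" "a \<in> G N C" using sub by blast
                  then show False using AN by blast
                qed
              qed
            qed
          qed
        qed
        show False
        proof -
          define VV :: "'a set set set" where
            "VV = {V. openin (FinVietoris X) V \<and> (\<exists>n. \<forall>B'\<in>K. B' \<in> V \<longrightarrow> A \<notin> W n B')}"
          have opV: "\<forall>V\<in>VV. openin (FinVietoris X) V" unfolding VV_def by blast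
          have covK: "K \<subseteq> \<Union>VV"
          proof
            fix B assume "B \<in> K"
            then obtain V n where "openin (FinVietoris X) V" "B \<in> V" "\<forall>B'\<in>K. B' \<in> V \<longrightarrow> A \<notin> W n B'"
              using claim by blast
            then have "V \<in> VV" unfolding VV_def by blast
            then show "B \<in> \<Union>VV" using \<open>B \<in> V\<close> by blast
          qed
          have "\<forall>\<U>. (\<forall>U\<in>\<U>. openin (FinVietoris X) U) \<and> K \<subseteq> \<Union>\<U> \<longrightarrow> (\<exists>\<F>. finite \<F> \<and> \<F> \<subseteq> \<U> \<and> K \<subseteq> \<Union>\<F>)"
            using K unfolding compactin_def by blast
          then have "\<exists>\<F>. finite \<F> \<and> \<F> \<subseteq> VV \<and> K \<subseteq> \<Union>\<F>" using opV covK by blast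
          then obtain FF where FF: "finite FF" "FF \<subseteq> VV" "K \<subseteq> \<Union>FF" by blast
          have "\<forall>V\<in>FF. \<exists>n. \<forall>B'\<in>K. B' \<in> V \<longrightarrow> A \<notin> W n B'" using FF(2) unfolding VV_def by blast
          then obtain g where g: "\<forall>V\<in>FF. \<forall>B'\<in>K. B' \<in> V \<longrightarrow> A \<notin> W (g V) B'"
            by (rule bchoice[elim_format]) blast
          have "finite (g ` FF)" using FF(1) by simp
          then obtain N where N: "\<forall>k\<in>g ` FF. k \<le> N" unfolding finite_nat_set_iff_bounded_le by blast
          have "A \<in> Gf N K" using A by simp
          then obtain B' where B': "B' \<in> K" "A \<in> W N B'" unfolding Gf_def by blast
          then obtain V where V: "V \<in> FF" "B' \<in> V" using FF(3) by blast
          have "W N B' \<subseteq> W (g V) B'" using N V(1) by (intro Wanti) simp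
          then have "A \<in> W (g V) B'" using B'(2) by blast
          then show False using g V B'(1) by blast
        qed
      qed
    qed
    ultimately have "K = (\<Inter>n. Gf n K)" by (rule subset_antisym)
    with op show ?thesis by (rule conjI)
  qed
  have P2: "Gf n K \<subseteq> Gf n L" if "K \<subseteq> L" for n K L
    unfolding Gf_def using that by blast
  show ?thesis unfolding c_semi_stratifiable_def
  proof (rule exI[of _ Gf], rule conjI)
    show "\<forall>C. compactin (FinVietoris X) C \<longrightarrow> (\<forall>n. openin (FinVietoris X) (Gf n C)) \<and> C = (\<Inter>n. Gf n C)"
      using P1 by simp
    show "\<forall>C F. compactin (FinVietoris X) C \<and> compactin (FinVietoris X) F \<and> C \<subseteq> F \<longrightarrow> (\<forall>n. Gf n C \<subseteq> Gf n F)"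
      using P2 by simp
  qed
qed

theorem theorem4p9:
  fixes X :: "'a topology"
  assumes "regular_space X" and "Hausdorff_space X"
  shows "c_semi_stratifiable X \<longleftrightarrow> c_semi_stratifiable (FinVietoris X)"
proof
  assume "c_semi_stratifiable X"
  then show "c_semi_stratifiable (FinVietoris X)" using assms by (intro dir2)
next
  assume "c_semi_stratifiable (FinVietoris X)"
  then show "c_semi_stratifiable X" by (rule dir1)
qed

end
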